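(* Assume $\|\hat F'(y)-\hat F'(x)\|_F\le L_{\hat F}\|y-x\|$ for all $x,y\in\mathcal F$ and that $\sigma_{\min}(\hat F'(x)^* )\ge\sqrt\mu$ for all $x\in\mathcal F$, some $\mu>0$. Let $\{x_k\}$ be computed by Scheme 1 in which $x_{k+1}$ is given by $$x_{k+1}=x_k-\eta_k\big(\hat F'(x_k)^*\hat F'(x_k)+\tau_kL_kI_n\big)^{-1}\hat F'(x_k)^*\hat F(x_k),$$ with $\tau_k>0$ and $\eta_k\in(0,2)$. Then for $k\in\mathbb Z_+$: $$\hat f_1(x_{k+1})\le\frac{\tau_k}{2}+\begin{cases}\frac{\hat f_2(x_k)}{2\tau_k}\Big(1-\frac{\eta_k(2-\eta_k)\mu}{L_k\tau_k+\mu}\Big),&\tau_k\ge\frac{\mu}{L_k},\\ \frac{\hat f_2(x_k)(1-\eta_k)^2}{2\tau_k}+\frac{\eta_k(2-\eta_k)L_k\hat f_2(x_k)}{2\mu}-\frac{\eta_k(2-\eta_k)L_k^2\hat f_2(x_k)\tau_k}{2\mu^2(1+\xi)^3}&\text{for some }\xi\in(-1,1],\ \text{if }\tau_k<\frac{\mu}{L_k}.\end{cases}$$ Moreover, if $\eta_k=1$ for all $k$, then $\hat f_1(x_{k+1})\le\frac{\tau_k}{2}+\frac{L_{\hat F}}{\mu}\hat f_2(x_k)$.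
   Context: Let $F:\mathbb R^n\to\mathbb R^m$ be smooth, $\hat F=\frac1{\sqrt m}F$ with Jacobian $\hat F'(x)$ and its transpose $\hat F'(x)^*$; Euclidean norms, $\|\cdot\|_F$ Frobenius norm. $\hat f_1(x)=\|\hat F(x)\|$, $\hat f_2=\hat f_1^2$, $\psi_{x,L,\tau}(y)=\frac\tau2+\frac{\|\hat F(x)+\hat F'(x)(y-x)\|^2}{2\tau}+\frac L2\|y-x\|^2$. $\mathcal F$ closed convex with nonempty interior, $\mathcal L(\hat f_1(x_0))\subseteq\mathcal F$ and the generated sequence stays in $\mathcal F$. Scheme 1 (as used here, with $x_{k+1}$ given by the displayed formula): input $x_0$, $L\in(0,L_{\hat F}]$, $L_0=L$; at iteration $k$ choose $\tau_k$, compute $x_{k+1}$; if $\hat f_1(x_{k+1})>\psi_{x_k,L_k,\tau_k}(x_{k+1})$, set $L_k:=\min\{2L_k,2L_{\hat F}\}$ and recompute; otherwise $L_{k+1}=\max\{L_k/2,L\}$. *)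

theory Defs
  imports "HOL-Analysis.Analysis"
begin

definition Fhat :: "(real^'n \<Rightarrow> real^'m) \<Rightarrow> real^'n \<Rightarrow> real^'m" where
  "Fhat F x = (1 / sqrt (real CARD('m))) *\<^sub>R F x"

definition f1hat :: "(real^'n \<Rightarrow> real^'m) \<Rightarrow> real^'n \<Rightarrow> real" where
  "f1hat F x = norm (Fhat F x)"

definition f2hat :: "(real^'n \<Rightarrow> real^'m) \<Rightarrow> real^'n \<Rightarrow> real" where
  "f2hat F x = (f1hat F x)\<^sup>2"

definition frob_norm :: "real^'n^'m \<Rightarrow> real" where
  "frob_norm A = sqrt (\<Sum>i\<in>UNIV. \<Sum>j\<in>UNIV. (A $ i $ j)\<^sup>2)"

definition sigma_min :: "real^'q^'p \<Rightarrow> real" where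
  "sigma_min A = Inf {norm (A *v v) | v. norm v = 1}"

text \<open>The model  psi_{x,L,tau}(y); J x is the Jacobian of Fhat at x.\<close>
definition psi :: "(real^'n \<Rightarrow> real^'m) \<Rightarrow> (real^'n \<Rightarrow> real^'n^'m)
    \<Rightarrow> real^'n \<Rightarrow> real \<Rightarrow> real \<Rightarrow> real^'n \<Rightarrow> real" where
  "psi F J x L tau y = tau / 2 + (norm (Fhat F x + J x *v (y - x)))\<^sup>2 / (2 * tau)
      + L / 2 * (norm (y - x))\<^sup>2"

definition lm_step :: "(real^'n \<Rightarrow> real^'m) \<Rightarrow> (real^'n \<Rightarrow> real^'n^'m)
    \<Rightarrow> real^'n \<Rightarrow> real \<Rightarrow> real \<Rightarrow> real \<Rightarrow> real^'n" where
  "lm_step F J x tau eta L =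
     x - eta *\<^sub>R (matrix_inv (transpose (J x) ** J x + (tau * L) *\<^sub>R mat 1)
                   *v (transpose (J x) *v Fhat F x))"

definition scheme1_init :: "real \<Rightarrow> (nat \<Rightarrow> real) \<Rightarrow> nat \<Rightarrow> real" where
  "scheme1_init L Lk k = (if k = 0 then L else max (Lk (k - 1) / 2) L)"

definition scheme1_trial :: "real \<Rightarrow> real \<Rightarrow> nat \<Rightarrow> real" where
  "scheme1_trial LF L0 j = (if j = 0 then L0 else min (2 ^ j * L0) (2 * LF))"

definition scheme1_accept :: "(real^'n \<Rightarrow> real^'m) \<Rightarrow> (real^'n \<Rightarrow> real^'n^'m)
    \<Rightarrow> real^'n \<Rightarrow> real \<Rightarrow> real \<Rightarrow> real \<Rightarrow> bool" where
  "scheme1_accept F J x tau eta Lv \<longleftrightarrow>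
     f1hat F (lm_step F J x tau eta Lv) \<le> psi F J x Lv tau (lm_step F J x tau eta Lv)"

definition scheme1 :: "(real^'n \<Rightarrow> real^'m) \<Rightarrow> (real^'n \<Rightarrow> real^'n^'m) \<Rightarrow> real \<Rightarrow> real
    \<Rightarrow> real^'n \<Rightarrow> (nat \<Rightarrow> real) \<Rightarrow> (nat \<Rightarrow> real) \<Rightarrow> (nat \<Rightarrow> real^'n) \<Rightarrow> (nat \<Rightarrow> real) \<Rightarrow> bool" where
  "scheme1 F J L LF x0 tau eta x Lk \<longleftrightarrow>
     x 0 = x0 \<and>
     (\<forall>k. \<exists>j. Lk k = scheme1_trial LF (scheme1_init L Lk k) j
             \<and> (\<forall>i<j. \<not> scheme1_accept F J (x k) (tau k) (eta k)
                          (scheme1_trial LF (scheme1_init L Lk k) i))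
             \<and> scheme1_accept F J (x k) (tau k) (eta k) (Lk k)
             \<and> x (Suc k) = lm_step F J (x k) (tau k) (eta k) (Lk k))"

end

theory Submission imports Defs begin

lemma tr_inner: "(transpose A *v x) \<bullet> y = x \<bullet> ((A::real^'n^'m) *v y)"
  by (simp add: transpose_matrix_vector dot_lmul_matrix)

lemma tr_inner2: "x \<bullet> (transpose A *v y) = ((A::real^'n^'m) *v x) \<bullet> y"
  by (metis tr_inner inner_commute)

declare transpose_matrix_vector[simp del]

lemma inv_right:
  fixes B :: "real^'n^'n"
  assumes "\<And>v. B *v v = 0 \<Longrightarrow> v = 0"
  shows "B ** matrix_inv B = mat 1"
proof -
  have "inj ((*v) B)" using assms vec.inj_iff_eq_0 by blast
  then have "invertible B" using matrix_left_invertible_injective invertible_left_inverse by metis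
  then have "\<exists>A'. B ** A' = mat 1 \<and> A' ** B = mat 1" by (simp add: invertible_def)
  then have "B ** matrix_inv B = mat 1 \<and> matrix_inv B ** B = mat 1"
    unfolding matrix_inv_def by (rule someI_ex)
  then show ?thesis by simp
qed

lemma core:
  fixes J :: "real^'n^'m" and F :: "real^'m" and c mu eta :: real
  assumes c: "c > 0" and mu: "mu > 0" and eta: "0 \<le> eta * (2 - eta)"
    and sig: "\<And>v. mu * (norm v)\<^sup>2 \<le> (norm (transpose J *v v))\<^sup>2"
  defines "B \<equiv> transpose J ** J + c *\<^sub>R mat 1"
  defines "y \<equiv> matrix_inv B *v (transpose J *v F)"
  shows "(norm (F - eta *\<^sub>R (J *v y)))\<^sup>2 + c * eta\<^sup>2 * (norm y)\<^sup>2
          \<le> (1 - eta * (2 - eta) * mu / (mu + c)) * (norm F)\<^sup>2"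
proof -
  have Bv: "B *v v = transpose J *v (J *v v) + c *\<^sub>R v" for v
    by (simp add: B_def matrix_vector_mult_add_rdistrib matrix_vector_mul_assoc
        flip: scaleR_matrix_vector_assoc)
  have "B *v v = 0 \<Longrightarrow> v = 0" for v
  proof -
    assume "B *v v = 0"
    then have "v \<bullet> (B *v v) = 0" by simp
    then have "(J *v v) \<bullet> (J *v v) + c * (v \<bullet> v) = 0"
      by (simp add: Bv inner_add_right tr_inner tr_inner2)
    moreover have "(J *v v) \<bullet> (J *v v) \<ge> 0" by simp
    moreover have "v \<bullet> v \<ge> 0" by simp
    ultimately have "v \<bullet> v = 0" using c
      by (smt (verit, best) mult_pos_pos)
    then show "v = 0" by simp
  qed
  then have Binv: "B ** matrix_inv B = mat 1" by (rule inv_right)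
  have By: "B *v y = transpose J *v F"
    by (simp add: y_def matrix_vector_mul_assoc matrix_mul_assoc Binv matrix_mul_lid)
  define r where "r = F - J *v y"
  have Jr: "transpose J *v r = c *\<^sub>R y"
    using By by (simp add: r_def Bv matrix_vector_mult_diff_distrib algebra_simps)
  define a where "a = (J *v y) \<bullet> (J *v y)"
  define b where "b = y \<bullet> y"
  define f where "f = F \<bullet> F"
  define s where "s = F \<bullet> (J *v y)"
  define rr where "rr = r \<bullet> r"
  have s_eq: "s = a + c * b"
  proof -
    have "s = y \<bullet> (transpose J *v F)" by (simp add: s_def tr_inner tr_inner2 inner_commute)
    also have "\<dots> = y \<bullet> (B *v y)" by (simp add: By)
    also have "\<dots> = a + c * b"
      by (simp add: Bv inner_add_right tr_inner tr_inner2 a_def b_def)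
    finally show ?thesis .
  qed
  have rJy: "r \<bullet> (J *v y) = c * b"
  proof -
    have "r \<bullet> (J *v y) = (transpose J *v r) \<bullet> y" by (simp add: tr_inner)
    then show ?thesis by (simp add: Jr b_def)
  qed
  have f_eq: "f = rr + 2 * c * b + a"
  proof -
    have "F = r + J *v y" by (simp add: r_def)
    then have "f = (r + J *v y) \<bullet> (r + J *v y)" by (simp add: f_def)
    also have "\<dots> = rr + 2 * (r \<bullet> (J *v y)) + a"
      by (simp add: inner_add_left inner_add_right inner_commute rr_def a_def)
    finally show ?thesis using rJy by simp
  qed
  have rr_le: "mu * rr \<le> c\<^sup>2 * b"
  proof -
    have "mu * rr \<le> (norm (transpose J *v r))\<^sup>2" using sig[of r] by (simp add: rr_def power2_norm_eq_inner)
    also have "\<dots> = c\<^sup>2 * b" by (simp add: Jr b_def power_mult_distrib flip: power2_norm_eq_inner)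
    finally show ?thesis .
  qed
  have a_ge: "mu * b \<le> a"
  proof (cases "r = 0")
    case True
    then have "c *\<^sub>R y = 0" using Jr by simp
    then have "y = 0" using c by simp
    then show ?thesis by (simp add: a_def b_def)
  next
    case False
    then have rrpos: "rr > 0" by (simp add: rr_def)
    have "(c * b)\<^sup>2 \<le> a * rr"
    proof -
      have "\<bar>r \<bullet> (J *v y)\<bar> \<le> norm r * norm (J *v y)" by (rule Cauchy_Schwarz_ineq2)
      then have "(r \<bullet> (J *v y))\<^sup>2 \<le> (norm r * norm (J *v y))\<^sup>2"
        by (metis abs_ge_zero power2_abs power_mono)
      then show ?thesis using rJy
        by (simp add: power_mult_distrib power2_norm_eq_inner a_def rr_def mult.commute)
    qed
    moreover have "mu * rr * b \<le> c\<^sup>2 * b * b"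
      using rr_le by (simp add: b_def mult_right_mono)
    ultimately have "mu * b * rr \<le> a * rr"
      by (simp add: power2_eq_square algebra_simps)
    then show ?thesis using rrpos by simp
  qed
  have key: "mu * f \<le> (mu + c) * s"
  proof -
    have e: "(mu + c) * s - mu * f = c * (a - mu * b) + (c\<^sup>2 * b - mu * rr)"
      by (simp add: s_eq f_eq algebra_simps power2_eq_square)
    have "c * (a - mu * b) \<ge> 0" using c a_ge by simp
    then show ?thesis using e rr_le by linarith
  qed
  have n1: "(norm (F - eta *\<^sub>R (J *v y)))\<^sup>2 = f - 2 * eta * s + eta\<^sup>2 * a"
    unfolding power2_norm_eq_inner
    by (simp add: inner_diff_left inner_diff_right inner_commute f_def s_def a_def power2_eq_square algebra_simps)
  have n2: "(norm y)\<^sup>2 = b" by (simp add: b_def power2_norm_eq_inner)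
  have lhs: "(norm (F - eta *\<^sub>R (J *v y)))\<^sup>2 + c * eta\<^sup>2 * (norm y)\<^sup>2 = f - eta * (2 - eta) * s"
    unfolding n1 n2 s_eq by (simp add: algebra_simps power2_eq_square)
  have "eta * (2 - eta) * (mu * f / (mu + c)) \<le> eta * (2 - eta) * s"
    using key mu c eta by (intro mult_left_mono) (simp_all add: divide_simps mult.commute)
  then show ?thesis unfolding lhs using mu c
    by (simp add: algebra_simps power2_norm_eq_inner f_def)
qed

lemma sig_bound:
  fixes A :: "real^'q^'p"
  assumes "sigma_min A \<ge> sqrt mu" "mu > 0"
  shows "mu * (norm v)\<^sup>2 \<le> (norm (A *v v))\<^sup>2"
proof (cases "v = 0")
  case True then show ?thesis by simp
next
  case False
  define S where "S = {norm (A *v w) | w. norm w = 1}"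
  define u where "u = (1 / norm v) *\<^sub>R v"
  have nu: "norm u = 1" using False by (simp add: u_def)
  have "bdd_below S" unfolding S_def by (rule bdd_belowI[of _ 0]) auto
  moreover have "norm (A *v u) \<in> S" using nu unfolding S_def by blast
  ultimately have "Inf S \<le> norm (A *v u)" by (metis cInf_lower)
  then have "sqrt mu \<le> norm (A *v u)" using assms(1) unfolding sigma_min_def S_def by simp
  also have "norm (A *v u) = norm (A *v v) / norm v"
    by (simp add: u_def matrix_scaleR_vector_ac flip: scaleR_matrix_vector_assoc)
  finally have "sqrt mu * norm v \<le> norm (A *v v)" using False by (simp add: field_simps)
  then have "(sqrt mu * norm v)\<^sup>2 \<le> (norm (A *v v))\<^sup>2"
    by (intro power_mono) (use assms in auto)
  then show ?thesis using assms by (simp add: power_mult_distrib)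
qed

lemma aux8:
  fixes u mu :: real
  assumes "0 < u" "u < mu"
  shows "1 / (u + mu) \<le> 1 / mu - u / (8 * mu\<^sup>2)"
proof -
  have "u * u \<le> mu * u" using assms by (simp add: mult_right_mono)
  moreover have "mu * u > 0" using assms by simp
  ultimately have "u * u \<le> mu * (u * 7)" by linarith
  then have "8 * mu\<^sup>2 \<le> (8 * mu - u) * (u + mu)" by (simp add: power2_eq_square algebra_simps)
  then have "1 / (u + mu) \<le> (8 * mu - u) / (8 * mu\<^sup>2)" using assms
    by (simp add: divide_simps)
  also have "\<dots> = 1 / mu - u / (8 * mu\<^sup>2)" using assms by (simp add: field_simps power2_eq_square)
  finally show ?thesis .
qed

theorem theorem5:
  fixes F :: "real^'n \<Rightarrow> real^'m"
    and J :: "real^'n \<Rightarrow> real^'n^'m"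
    and FF :: "(real^'n) set"
    and L LF mu :: real
    and x0 :: "real^'n"
    and tau eta Lk :: "nat \<Rightarrow> real"
    and x :: "nat \<Rightarrow> real^'n"
  assumes jac: "\<And>y. (Fhat F has_derivative (\<lambda>h. J y *v h)) (at y)"
    and jac_cont: "continuous_on UNIV J"
    and FF_closed: "closed FF" and FF_convex: "convex FF" and FF_int: "interior FF \<noteq> {}"
    and level: "{y. f1hat F y \<le> f1hat F x0} \<subseteq> FF"
    and stay: "\<And>k. x k \<in> FF"
    and L_pos: "0 < L" and L_le: "L \<le> LF"
    and lip: "\<And>y z. y \<in> FF \<Longrightarrow> z \<in> FF \<Longrightarrow> frob_norm (J z - J y) \<le> LF * norm (z - y)"
    and mu_pos: "0 < mu"
    and sigma: "\<And>y. y \<in> FF \<Longrightarrow> sigma_min (transpose (J y)) \<ge> sqrt mu"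
    and tau_pos: "\<And>k. 0 < tau k"
    and eta_rng: "\<And>k. 0 < eta k \<and> eta k < 2"
    and scheme: "scheme1 F J L LF x0 tau eta x Lk"
  shows "(\<forall>k. (tau k \<ge> mu / Lk k \<longrightarrow>
              f1hat F (x (Suc k)) \<le> tau k / 2 + f2hat F (x k) / (2 * tau k)
                 * (1 - eta k * (2 - eta k) * mu / (Lk k * tau k + mu)))
            \<and> (tau k < mu / Lk k \<longrightarrow>
              (\<exists>\<xi>. -1 < \<xi> \<and> \<xi> \<le> 1 \<and>
                 f1hat F (x (Suc k)) \<le> tau k / 2
                   + f2hat F (x k) * (1 - eta k)\<^sup>2 / (2 * tau k)
                   + eta k * (2 - eta k) * Lk k * f2hat F (x k) / (2 * mu)
                   - eta k * (2 - eta k) * (Lk k)\<^sup>2 * f2hat F (x k) * tau k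
                       / (2 * mu\<^sup>2 * (1 + \<xi>) ^ 3))))
         \<and> ((\<forall>k. eta k = 1) \<longrightarrow>
              (\<forall>k. f1hat F (x (Suc k)) \<le> tau k / 2 + LF / mu * f2hat F (x k)))"
proof -
  have sch: "\<exists>j. Lk k = scheme1_trial LF (scheme1_init L Lk k) j
             \<and> scheme1_accept F J (x k) (tau k) (eta k) (Lk k)
             \<and> x (Suc k) = lm_step F J (x k) (tau k) (eta k) (Lk k)" for k
    using scheme unfolding scheme1_def by blast
  have Lbnd: "L \<le> Lk k \<and> Lk k \<le> 2 * LF" for k
  proof (induction k)
    case 0
    from sch[of 0] obtain j where "Lk 0 = scheme1_trial LF (scheme1_init L Lk 0) j" by blast
    then show ?case using L_le L_pos
      by (auto simp: scheme1_trial_def scheme1_init_def min_def)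
  next
    case (Suc k)
    from sch[of "Suc k"] obtain j where j: "Lk (Suc k) = scheme1_trial LF (scheme1_init L Lk (Suc k)) j" by blast
    define L0 where "L0 = scheme1_init L Lk (Suc k)"
    have L0: "L \<le> L0" "L0 \<le> LF" using Suc L_le unfolding L0_def scheme1_init_def by auto
    have "L0 \<le> 2 ^ j * L0" using L0 L_pos by (simp add: mult_le_cancel_right1)
    then have "L \<le> 2 ^ j * L0" using L0 by linarith
    then show ?case using j L0 L_le L_pos unfolding L0_def[symmetric]
      by (auto simp: scheme1_trial_def min_def)
  qed
  have gen: "f1hat F (x (Suc k)) \<le> tau k / 2 + f2hat F (x k) / (2 * tau k)
                 * (1 - eta k * (2 - eta k) * mu / (Lk k * tau k + mu))" for k
  proof -
    from sch[of k] have acc: "scheme1_accept F J (x k) (tau k) (eta k) (Lk k)"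
      and xs: "x (Suc k) = lm_step F J (x k) (tau k) (eta k) (Lk k)" by auto
    define c where "c = tau k * Lk k"
    define Jk where "Jk = J (x k)"
    define Fk where "Fk = Fhat F (x k)"
    define y where "y = matrix_inv (transpose Jk ** Jk + c *\<^sub>R mat 1) *v (transpose Jk *v Fk)"
    have tp: "tau k > 0" by (rule tau_pos)
    have cpos: "c > 0" using tp Lbnd[of k] L_pos unfolding c_def by simp
    have e: "0 \<le> eta k * (2 - eta k)" using eta_rng[of k] by simp
    have sg: "\<And>v. mu * (norm v)\<^sup>2 \<le> (norm (transpose Jk *v v))\<^sup>2"
      unfolding Jk_def using sig_bound sigma stay mu_pos by blast
    have cr: "(norm (Fk - eta k *\<^sub>R (Jk *v y)))\<^sup>2 + c * (eta k)\<^sup>2 * (norm y)\<^sup>2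
          \<le> (1 - eta k * (2 - eta k) * mu / (mu + c)) * (norm Fk)\<^sup>2"
      unfolding y_def by (rule core[OF cpos mu_pos e sg])
    have d: "x (Suc k) - x k = - (eta k *\<^sub>R y)"
      using xs by (simp add: lm_step_def y_def c_def Jk_def Fk_def)
    have Jd: "Jk *v (- (eta k *\<^sub>R y)) = - (eta k *\<^sub>R (Jk *v y))"
      by (metis linear_neg[OF matrix_vector_mul_linear] matrix_vector_mult_scaleR)
    have "f1hat F (x (Suc k)) \<le> psi F J (x k) (Lk k) (tau k) (x (Suc k))"
      using acc xs by (simp add: scheme1_accept_def)
    also have "\<dots> = tau k / 2 + ((norm (Fk - eta k *\<^sub>R (Jk *v y)))\<^sup>2 + c * (eta k)\<^sup>2 * (norm y)\<^sup>2) / (2 * tau k)"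
      unfolding psi_def d Jk_def[symmetric] Fk_def[symmetric] Jd using tp
      by (simp add:  c_def matrix_vector_right_distrib power_mult_distrib
          field_simps power2_eq_square flip: scaleR_matrix_vector_assoc)
    also have "\<dots> \<le> tau k / 2 + (1 - eta k * (2 - eta k) * mu / (mu + c)) * (norm Fk)\<^sup>2 / (2 * tau k)"
      using cr tp by (simp add: divide_right_mono)
    also have "\<dots> = tau k / 2 + f2hat F (x k) / (2 * tau k)
                 * (1 - eta k * (2 - eta k) * mu / (Lk k * tau k + mu))"
    proof -
      have eq: "mu + c = Lk k * tau k + mu" by (simp add: c_def)
      show ?thesis unfolding eq by (simp add: f2hat_def f1hat_def Fk_def)
    qed
    finally show ?thesis .
  qed
  have case2: "f1hat F (x (Suc k)) \<le> tau k / 2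
                   + f2hat F (x k) * (1 - eta k)\<^sup>2 / (2 * tau k)
                   + eta k * (2 - eta k) * Lk k * f2hat F (x k) / (2 * mu)
                   - eta k * (2 - eta k) * (Lk k)\<^sup>2 * f2hat F (x k) * tau k
                       / (2 * mu\<^sup>2 * (1 + 1) ^ 3)" if lt: "tau k < mu / Lk k" for k
  proof -
    define P where "P = eta k * (2 - eta k)"
    define f where "f = f2hat F (x k)"
    define t where "t = tau k"
    define l where "l = Lk k"
    have tp: "t > 0" using tau_pos t_def by simp
    have lp: "l > 0" using Lbnd[of k] L_pos l_def by simp
    have u: "l * t < mu" using lt lp by (simp add: t_def l_def field_simps)
    have up: "0 < l * t" using lp tp by simp
    have fp: "f \<ge> 0" by (simp add: f_def f2hat_def)
    have Pp: "P \<ge> 0" using eta_rng[of k] by (simp add: P_def)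
    have e1: "(1 - eta k)\<^sup>2 = 1 - P" by (simp add: P_def power2_eq_square algebra_simps)
    have eq1: "f / (2 * t) * (1 - P * mu / (l * t + mu)) = f * (1 - eta k)\<^sup>2 / (2 * t)
          + (P * f * l / 2) * (1 / (l * t + mu))"
    proof -
      have pos: "l * t + mu \<noteq> 0" "mu + l * t \<noteq> 0" using up mu_pos by linarith+
      have pos2: "mu * t + l * (t * t) \<noteq> 0" using up mu_pos tp
        by (metis add_pos_pos mult_pos_pos mult.assoc distrib_right less_irrefl mult.commute)
      show ?thesis unfolding e1 using tp pos pos2 by (simp add: field_simps)
    qed
    have "(P * f * l / 2) * (1 / (l * t + mu)) \<le> (P * f * l / 2) * (1 / mu - l * t / (8 * mu\<^sup>2))"
      using aux8[OF up u] Pp fp lp by (intro mult_left_mono) (simp_all add: add.commute)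
    also have "\<dots> = P * l * f / (2 * mu) - P * l\<^sup>2 * f * t / (2 * mu\<^sup>2 * (1 + 1) ^ 3)"
      using mu_pos by (simp add: field_simps power2_eq_square)
    finally have "f / (2 * t) * (1 - P * mu / (l * t + mu)) \<le> f * (1 - eta k)\<^sup>2 / (2 * t)
         + (P * l * f / (2 * mu) - P * l\<^sup>2 * f * t / (2 * mu\<^sup>2 * (1 + 1) ^ 3))"
      unfolding eq1 by simp
    then show ?thesis using gen[of k] unfolding P_def f_def t_def l_def by simp
  qed
  have case3: "f1hat F (x (Suc k)) \<le> tau k / 2 + LF / mu * f2hat F (x k)" if e: "eta k = 1" for k
  proof -
    define f where "f = f2hat F (x k)"
    define t where "t = tau k"
    define l where "l = Lk k"
    have tp: "t > 0" using tau_pos t_def by simp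
    have lp: "l > 0" using Lbnd[of k] L_pos l_def by simp
    have l2: "l \<le> 2 * LF" using Lbnd[of k] l_def by simp
    have fp: "f \<ge> 0" by (simp add: f_def f2hat_def)
    have "f / (2 * t) * (1 - 1 * (2 - 1) * mu / (l * t + mu)) = f * l / 2 * (1 / (l * t + mu))"
    proof -
      have up: "0 < l * t" using lp tp by simp
      have pos: "l * t + mu \<noteq> 0" "mu + l * t \<noteq> 0" using up mu_pos by linarith+
      have pos2: "mu * 2 + l * (t * 2) \<noteq> 0" "mu * t + l * (t * t) \<noteq> 0" using up mu_pos tp
        by (metis add_pos_pos mult_pos_pos mult.assoc distrib_right less_irrefl mult.commute zero_less_numeral)+
      show ?thesis using tp pos pos2 by (simp add: field_simps)
    qed
    also have "\<dots> \<le> f * l / 2 * (1 / mu)"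
      using fp lp tp mu_pos by (intro mult_left_mono) (simp_all add: frac_le)
    also have "\<dots> \<le> f * (2 * LF) / 2 * (1 / mu)"
      using fp l2 mu_pos by (intro mult_right_mono divide_right_mono mult_left_mono) simp_all
    also have "\<dots> = LF / mu * f" by simp
    finally show ?thesis using gen[of k] e unfolding f_def t_def l_def by simp
  qed
  show ?thesis
  proof (intro conjI allI impI)
    fix k assume "tau k < mu / Lk k"
    then show "\<exists>\<xi>. -1 < \<xi> \<and> \<xi> \<le> 1 \<and>
                 f1hat F (x (Suc k)) \<le> tau k / 2
                   + f2hat F (x k) * (1 - eta k)\<^sup>2 / (2 * tau k)
                   + eta k * (2 - eta k) * Lk k * f2hat F (x k) / (2 * mu)
                   - eta k * (2 - eta k) * (Lk k)\<^sup>2 * f2hat F (x k) * tau k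
                       / (2 * mu\<^sup>2 * (1 + \<xi>) ^ 3)"
      using case2 by (intro exI[of _ 1]) simp
  qed (use gen case3 in auto)
qed

end
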